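(* Let $a_1,a_2,\ldots,a_W$ with $a_t\in\{1,2,\ldots,n\}$ be an access sequence of length $W$. For $t\ge 0$ and $i\in\{1,\dots,n\}$ let $w_i^{(t)}$ be the number of indices $s\le t$ with $a_s=i$, let $w_i=w_i^{(W)}$, and let $H=\sum_{i:\,w_i>0}\frac{w_i}{W}\log\frac{W}{w_i}$ be the entropy of the full access sequence. Then $$\sum_{t=1}^W \log \frac{t}{\max\left(w^{(t-1)}_{a_t},\,1\right)} \le W\cdot H + 2W.$$
   Context: $\log$ denotes the binary logarithm. *)

theory Defs
  imports Complex_Main
begin

text \<open>Access sequence a_1..a_W given as a function on nat (values outside 1..W irrelevant).
  cnt a i t = number of indices s with 1 <= s <= t and a s = i.\<close>
definition cnt :: "(nat \<Rightarrow> nat) \<Rightarrow> nat \<Rightarrow> nat \<Rightarrow> nat" where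
  "cnt a i t = card {s \<in> {1..t}. a s = i}"

definition entropy :: "(nat \<Rightarrow> nat) \<Rightarrow> nat \<Rightarrow> nat \<Rightarrow> real" where
  "entropy a n W = (\<Sum>i\<in>{i\<in>{1..n}. cnt a i W > 0}.
      (real (cnt a i W) / real W) * log 2 (real W / real (cnt a i W)))"

end

theory Submission
  imports Defs "HOL-Analysis.Harmonic_Numbers"
begin

definition G :: "nat \<Rightarrow> real" where
  "G k = (\<Sum>j\<in>{1..<k}. log 2 (real j))"

lemma G_0[simp]: "G 0 = 0" by (simp add: G_def)

lemma G_Suc: "G (Suc k) = G k + log 2 (real (max k 1))"
proof (cases k)
  case 0 then show ?thesis by (simp add: G_def)
next
  case (Suc m)
  then have "{1..<Suc k} = insert k {1..<k}" by auto
  then show ?thesis using Suc by (simp add: G_def max_def)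
qed

lemma cnt_Suc: "cnt a i (Suc t) = cnt a i t + (if a (Suc t) = i then 1 else 0)"
proof -
  have e: "{s \<in> {1..Suc t}. a s = i} = {s \<in> {1..t}. a s = i} \<union> (if a (Suc t) = i then {Suc t} else {})"
    by (auto simp: le_Suc_eq)
  show ?thesis unfolding cnt_def e by (auto simp: card_insert_if)
qed

lemma cnt_0[simp]: "cnt a i 0 = 0" by (simp add: cnt_def)

lemma step_bound:
  assumes "w \<ge> (1::nat)"
  shows "real (w+1) * (log 2 (real (w+1)) - log 2 (real w)) \<le> 2"
proof -
  consider "w = 1" | "w = 2" | "w \<ge> 3" using assms by linarith
  then show ?thesis
  proof cases
    case 1 then show ?thesis by simp
  next
    case 2
    have "log 2 ((3::real)^3) = real 3 * log 2 3" by (rule log_nat_power) simp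
    then have "3 * log 2 (3::real) = log 2 (3^3)" by simp
    also have "\<dots> \<le> log 2 (2^5)" by simp
    also have "\<dots> = real 5 * log 2 2" by (rule log_nat_power) simp
    also have "\<dots> = 5" by simp
    finally show ?thesis using 2 by simp
  next
    case 3
    have wp: "real w > 0" using assms by simp
    have "log 2 (real (w+1)) - log 2 (real w) = ln ((real w + 1) / real w) / ln 2"
      using wp by (simp add: log_def ln_div diff_divide_distrib)
    also have "(real w + 1) / real w = 1 + 1 / real w" using wp by (simp add: field_simps)
    also have "ln (1 + 1 / real w) / ln 2 \<le> (1 / real w) / ln 2"
      by (rule divide_right_mono) (auto intro: ln_add_one_self_le_self)
    also have "\<dots> \<le> (1 / real w) / (2/3)"
      using ln2_ge_two_thirds wp by (intro divide_left_mono) auto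
    finally have h: "log 2 (real (w+1)) - log 2 (real w) \<le> 3 / (2 * real w)" by simp
    have "real (w+1) * (log 2 (real (w+1)) - log 2 (real w)) \<le> real (w+1) * (3 / (2 * real w))"
      by (rule mult_left_mono[OF h]) simp
    also have "\<dots> \<le> 2" using 3 wp by (simp add: field_simps)
    finally show ?thesis .
  qed
qed

lemma G_bound: "w \<ge> 1 \<Longrightarrow> real w * log 2 (real w) \<le> G w + 2 * real w"
proof (induction w rule: nat_induct_at_least)
  case base then show ?case by (simp add: G_def)
next
  case (Suc w)
  have s: "real (w+1) * (log 2 (real (w+1)) - log 2 (real w)) \<le> 2" using step_bound Suc by simp
  have "G (Suc w) = G w + log 2 (real w)" using Suc by (simp add: G_Suc max_def)
  then show ?case using Suc s by (simp add: algebra_simps)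
qed

lemma lhs_eq:
  "(\<Sum>t=1..W. log 2 (real (max (cnt a (a t) (t - 1)) 1))) = (\<Sum>i\<in>I. G (cnt a i W))"
  if "finite I" "\<forall>t\<in>{1..W}. a t \<in> I"
  using that(2)
proof (induction W)
  case 0 then show ?case by simp
next
  case (Suc W)
  have IH: "(\<Sum>t=1..W. log 2 (real (max (cnt a (a t) (t - 1)) 1))) = (\<Sum>i\<in>I. G (cnt a i W))"
    using Suc by auto
  have mem: "a (Suc W) \<in> I" using Suc.prems by auto
  have "(\<Sum>i\<in>I. G (cnt a i (Suc W))) = (\<Sum>i\<in>I. G (cnt a i W) + (if i = a (Suc W) then log 2 (real (max (cnt a i W) 1)) else 0))"
    by (intro sum.cong) (auto simp: cnt_Suc G_Suc)
  also have "\<dots> = (\<Sum>i\<in>I. G (cnt a i W)) + log 2 (real (max (cnt a (a (Suc W)) W) 1))"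
    using that(1) mem by (simp add: sum.distrib)
  finally show ?case using IH by simp
qed

lemma cnt_sum:
  "(\<Sum>i\<in>I. real (cnt a i W)) = real W"
  if "finite I" "\<forall>t\<in>{1..W}. a t \<in> I"
  using that(2)
proof (induction W)
  case 0 then show ?case by simp
next
  case (Suc W)
  have mem: "a (Suc W) \<in> I" using Suc.prems by auto
  have IH: "(\<Sum>i\<in>I. real (cnt a i W)) = real W" using Suc by auto
  have "(\<Sum>i\<in>I. real (cnt a i (Suc W))) = (\<Sum>i\<in>I. real (cnt a i W) + (if i = a (Suc W) then 1 else 0))"
    by (intro sum.cong) (auto simp: cnt_Suc)
  also have "\<dots> = real W + 1" using that(1) mem IH by (simp add: sum.distrib)
  finally show ?case by simp
qed

theorem lemma1:
  fixes a :: "nat \<Rightarrow> nat" and n W :: nat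
  assumes "\<forall>t\<in>{1..W}. a t \<in> {1..n}"
  shows "(\<Sum>t=1..W. log 2 (real t / real (max (cnt a (a t) (t - 1)) 1)))
           \<le> real W * entropy a n W + 2 * real W"
proof -
  define S where "S = {i\<in>{1..n}. cnt a i W > 0}"
  have finS: "finite S" by (simp add: S_def)
  have Gsum: "(\<Sum>t=1..W. log 2 (real (max (cnt a (a t) (t - 1)) 1))) = (\<Sum>i\<in>{1..n}. G (cnt a i W))"
    by (rule lhs_eq) (use assms in auto)
  also have "\<dots> = (\<Sum>i\<in>S. G (cnt a i W))"
    unfolding S_def by (rule sum.mono_neutral_right) auto
  finally have Gs: "(\<Sum>t=1..W. log 2 (real (max (cnt a (a t) (t - 1)) 1))) = (\<Sum>i\<in>S. G (cnt a i W))" .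
  have cs: "(\<Sum>i\<in>{1..n}. real (cnt a i W)) = real W"
    by (rule cnt_sum) (use assms in auto)
  also have "(\<Sum>i\<in>{1..n}. real (cnt a i W)) = (\<Sum>i\<in>S. real (cnt a i W))"
    unfolding S_def by (rule sum.mono_neutral_right) auto
  finally have csS: "(\<Sum>i\<in>S. real (cnt a i W)) = real W" .
  show ?thesis
  proof (cases "W = 0")
    case True then show ?thesis by simp
  next
    case False
    then have Wp: "real W > 0" by simp
    have split: "(\<Sum>t=1..W. log 2 (real t / real (max (cnt a (a t) (t - 1)) 1)))
        = (\<Sum>t=1..W. log 2 (real t)) - (\<Sum>t=1..W. log 2 (real (max (cnt a (a t) (t - 1)) 1)))"
      by (simp add: sum_subtractf[symmetric] log_divide) 
    have lt: "(\<Sum>t=1..W. log 2 (real t)) \<le> (\<Sum>t=1..W. log 2 (real W))"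
      by (intro sum_mono) auto
    have ent: "real W * entropy a n W = (\<Sum>i\<in>S. real (cnt a i W) * (log 2 (real W) - log 2 (real (cnt a i W))))"
      unfolding entropy_def S_def[symmetric] sum_distrib_left
      by (intro sum.cong) (use Wp in \<open>auto simp: S_def log_divide\<close>)
    also have "\<dots> = real W * log 2 (real W) - (\<Sum>i\<in>S. real (cnt a i W) * log 2 (real (cnt a i W)))"
      by (simp add: right_diff_distrib sum_subtractf sum_distrib_right[symmetric] csS)
    finally have ent2: "real W * entropy a n W = real W * log 2 (real W) - (\<Sum>i\<in>S. real (cnt a i W) * log 2 (real (cnt a i W)))" .
    have gb: "(\<Sum>i\<in>S. real (cnt a i W) * log 2 (real (cnt a i W))) \<le> (\<Sum>i\<in>S. G (cnt a i W) + 2 * real (cnt a i W))"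
      by (intro sum_mono G_bound) (auto simp: S_def)
    also have "\<dots> = (\<Sum>i\<in>S. G (cnt a i W)) + 2 * real W"
      by (simp add: sum.distrib sum_distrib_left[symmetric] csS)
    finally have gb2: "(\<Sum>i\<in>S. real (cnt a i W) * log 2 (real (cnt a i W))) \<le> (\<Sum>i\<in>S. G (cnt a i W)) + 2 * real W" .
    show ?thesis using split lt Gs ent2 gb2 by simp
  qed
qed

end
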